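(* Let $\beta\in(1/2,1)$, assume the coupling below with each $G_{n,i}$ having a continuous density on $(0,1)$ bounded by a constant $C<\infty$ independent of $n,i$. Fix $0<\eta<1/2$, let $\mathcal U_n=\{kn^{-3}:k=1,\dots,n^3-1\}$ and $\mathcal U_n^\eta=\mathcal U_n\cap(n^{-1+\eta},1/2)$. Then for every $c>0$ and $h\in\{0,1\}$, \[ \Pr\Big(\max_{u\in\mathcal U_n^\eta}\sqrt n\big(\tilde F^{(h)}(u)-\mathbb E\tilde F^{(h)}(u)\big)w(u)\ge c\Big)\to0\qquad(n\to\infty). \]
   Context: $\epsilon_n=n^{-\beta}$. Coupling: $I\subset\{1,\dots,n\}$ random with each $i$ included independently with probability $\epsilon_n$; $Q^{(0)}_1,\dots,Q^{(0)}_n$ i.i.d. $\mathrm{Unif}(0,1)$ independent of $I$; for $i\in I$, $Q^{(1)}_i\sim G_{n,i}$ independently of everything else; for $i\notin I$, $Q^{(1)}_i=Q^{(0)}_i$. For $h\in\{0,1\}$, $\tilde F^{(h)}(t)=\frac1n\sum_{i\in I}\mathbf 1(Q^{(h)}_i\le t)$; $\mathbb E$ is unconditional expectation; $w(t)=1/\sqrt{t(1-t)}$. *)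

theory Defs
  imports "HOL-Probability.Probability"
begin

text \<open>Index type for the independent primitive random variables of the coupling
  for a given n: the inclusion indicator of i, the uniform Q0_i, and the draw Y_i from G_(n,i).\<close>
datatype coord = CI nat | CQ0 nat | CY nat

definition eps_n :: "real \<Rightarrow> nat \<Rightarrow> real" where
  "eps_n \<beta> n = real n powr (- \<beta>)"

definition Q1 :: "('a \<Rightarrow> bool) \<Rightarrow> ('a \<Rightarrow> real) \<Rightarrow> ('a \<Rightarrow> real) \<Rightarrow> 'a \<Rightarrow> real" where
  "Q1 Ind Q0 Y \<omega> = (if Ind \<omega> then Y \<omega> else Q0 \<omega>)"

definition Ftilde ::
  "nat \<Rightarrow> (nat \<Rightarrow> 'a \<Rightarrow> bool) \<Rightarrow> (nat \<Rightarrow> 'a \<Rightarrow> real) \<Rightarrow> (nat \<Rightarrow> 'a \<Rightarrow> real)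
     \<Rightarrow> nat \<Rightarrow> real \<Rightarrow> 'a \<Rightarrow> real" where
  "Ftilde n Ind Q0 Y h t \<omega> =
     (1 / real n) * (\<Sum>i\<in>{i. i < n \<and> Ind i \<omega>}.
        (if (if h = 0 then Q0 i \<omega> else Q1 (Ind i) (Q0 i) (Y i) \<omega>) \<le> t then 1 else 0))"

definition wt :: "real \<Rightarrow> real" where
  "wt t = 1 / sqrt (t * (1 - t))"

definition Ugrid :: "real \<Rightarrow> nat \<Rightarrow> real set" where
  "Ugrid \<eta> n = {u. \<exists>k::nat. 1 \<le> k \<and> k \<le> n ^ 3 - 1 \<and> u = real k / real n ^ 3}
                 \<inter> {real n powr (-1 + \<eta>) <..< 1/2}"

end

theory Submission
  imports Defs
begin

lemma distr_bound:
  assumes P: "prob_space M"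
    and d: "distributed M lborel Z (\<lambda>x. ennreal (f x))"
    and f0: "\<And>x. 0 \<le> f x" and fK: "\<And>x. f x \<le> K"
    and fneg: "\<And>x. x \<le> 0 \<Longrightarrow> f x = 0" and v: "0 \<le> v"
  shows "measure M (Z -` {..v} \<inter> space M) \<le> K * v"
proof -
  interpret prob_space M by (rule P)
  have K0: "0 \<le> K" using f0[of 0] fK[of 0] by linarith
  have "emeasure M (Z -` {..v} \<inter> space M) = (\<integral>\<^sup>+x. ennreal (f x) * indicator {..v} x \<partial>lborel)"
    by (rule distributed_emeasure[OF d]) auto
  also have "\<dots> \<le> (\<integral>\<^sup>+x. ennreal K * indicator {0..v} x \<partial>lborel)"
  proof (rule nn_integral_mono)
    fix x
    show "ennreal (f x) * indicator {..v} x \<le> ennreal K * indicator {0..v} x"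
    proof (cases "x \<le> 0")
      case True
      then show ?thesis using fneg[OF True] by simp
    next
      case False
      then show ?thesis using fK[of x] by (auto simp: indicator_def intro: ennreal_leI)
    qed
  qed
  also have "\<dots> = ennreal K * emeasure lborel {0..v}"
    by (rule nn_integral_cmult_indicator) auto
  also have "\<dots> = ennreal (K * v)" using v K0 by (simp add: ennreal_mult)
  finally have "ennreal (measure M (Z -` {..v} \<inter> space M)) \<le> ennreal (K * v)"
    by (simp add: emeasure_eq_measure)
  then show ?thesis using K0 v by (simp add: ennreal_le_iff)
qed


lemma pair_bound:
  assumes P: "prob_space M"
    and ind: "prob_space.indep_vars M (\<lambda>_. borel) X J"
    and ab: "a \<in> J" "b \<in> J" "a \<noteq> b"
    and Xa: "\<And>\<omega>. X a \<omega> = (if Pr \<omega> then 1 else 0)"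
    and Xb: "\<And>\<omega>. X b \<omega> = Z \<omega>"
    and d: "distributed M lborel Z (\<lambda>x. ennreal (f x))"
    and f0: "\<And>x. 0 \<le> f x" and fK: "\<And>x. f x \<le> K"
    and fneg: "\<And>x. x \<le> 0 \<Longrightarrow> f x = 0" and v: "0 \<le> v"
  shows "measure M {\<omega>\<in>space M. Pr \<omega> \<and> Z \<omega> \<le> v} \<le> measure M {\<omega>\<in>space M. Pr \<omega>} * (K * v)"
proof -
  interpret prob_space M by (rule P)
  define A where "A = (\<lambda>i. if i = a then {1::real} else {..v})"
  have eq: "prob (\<Inter>i\<in>{a,b}. X i -` A i \<inter> space M) = (\<Prod>i\<in>{a,b}. prob (X i -` A i \<inter> space M))"
    by (rule indep_varsD[OF ind]) (use ab in \<open>auto simp: A_def\<close>)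
  have s1: "(\<Inter>i\<in>{a,b}. X i -` A i \<inter> space M) = {\<omega>\<in>space M. Pr \<omega> \<and> Z \<omega> \<le> v}"
    using ab by (auto simp: A_def Xa Xb split: if_splits)
  have s2: "X a -` A a \<inter> space M = {\<omega>\<in>space M. Pr \<omega>}"
    by (auto simp: A_def Xa split: if_splits)
  have s3: "X b -` A b \<inter> space M = Z -` {..v} \<inter> space M"
    using ab by (auto simp: A_def Xb)
  have "prob {\<omega>\<in>space M. Pr \<omega> \<and> Z \<omega> \<le> v} = prob {\<omega>\<in>space M. Pr \<omega>} * prob (Z -` {..v} \<inter> space M)"
  proof -
    have "{\<omega>\<in>space M. Pr \<omega> \<and> Z \<omega> \<le> v} = {\<omega> \<in> space M. Pr \<omega>} \<inter> (Z -` {..v} \<inter> space M)" by auto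
    then show ?thesis using eq ab by (simp add: s1 s2 s3)
  qed
  also have "\<dots> \<le> prob {\<omega>\<in>space M. Pr \<omega>} * (K * v)"
  proof (rule mult_left_mono)
    show "prob (Z -` {..v} \<inter> space M) \<le> K * v"
      by (rule distr_bound[OF P d]) (auto intro: f0 fK fneg v)
  qed (rule measure_nonneg)
  finally show ?thesis .
qed


lemma exists_j:
  fixes u :: real
  assumes "u \<le> 1" "(1/4)^(n+1) < u"
  shows "\<exists>j\<le>n. (1/4)^(j+1) < u \<and> u \<le> (1/4)^j"
  using assms
proof (induction n)
  case 0 then show ?case by auto
next
  case (Suc n)
  show ?case
  proof (cases "(1/4::real)^(n+1) < u")
    case True
    then obtain j where "j \<le> n" "(1/4)^(j+1) < u \<and> u \<le> (1/4)^j" using Suc by blast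
    then show ?thesis by (intro exI[of _ j]) auto
  next
    case False
    then show ?thesis using Suc.prems by (intro exI[of _ "Suc n"]) auto
  qed
qed

lemma small_pow:
  assumes "1 \<le> n" "0 < \<eta>"
  shows "(1/4::real)^(n+1) < real n powr (-1 + \<eta>)"
proof -
  have "real n < 2 ^ n" using less_exp[of n] by (metis of_nat_less_iff of_nat_numeral of_nat_power)
  also have "(2::real)^n \<le> 4^(n+1)"
  proof -
    have "(2::real)^n \<le> 4^n" by (rule power_mono) auto
    also have "(4::real)^n \<le> 4^(n+1)" by (rule power_increasing) auto
    finally show ?thesis .
  qed
  finally have a: "real n < 4^(n+1)" .
  have "(1/4::real)^(n+1) = 1 / 4^(n+1)" by (simp add: power_one_over)
  also have "\<dots> < 1 / real n" using a assms by (intro divide_strict_left_mono) auto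
  also have "1 / real n = real n powr (-1)" using assms by (simp add: powr_minus_divide)
  also have "\<dots> \<le> real n powr (-1 + \<eta>)" using assms by (intro powr_mono) auto
  finally show ?thesis .
qed


lemma per_n:
  fixes M :: "'a measure" and Ind :: "nat \<Rightarrow> 'a \<Rightarrow> bool" and Q0 Y :: "nat \<Rightarrow> 'a \<Rightarrow> real"
    and g :: "nat \<Rightarrow> real \<Rightarrow> real" and C \<eta> c e :: real and h n :: nat
  assumes P: "prob_space M"
    and indep: "prob_space.indep_vars M (\<lambda>_. borel)
        (\<lambda>j \<omega>. case j of CI i \<Rightarrow> (if Ind i \<omega> then 1 else 0) | CQ0 i \<Rightarrow> Q0 i \<omega> | CY i \<Rightarrow> Y i \<omega>)
        ({CI i | i. i < n} \<union> {CQ0 i | i. i < n} \<union> {CY i | i. i < n})"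
    and incl: "\<And>i. i < n \<Longrightarrow> measure M {\<omega> \<in> space M. Ind i \<omega>} = e"
    and unif: "\<And>i. i < n \<Longrightarrow> distributed M lborel (Q0 i) (\<lambda>x. ennreal (indicator {0<..<1} x))"
    and dens: "\<And>i. i < n \<Longrightarrow> distributed M lborel (Y i) (\<lambda>x. ennreal (g i x))"
    and dens_supp: "\<And>i x. x \<notin> {0<..<1} \<Longrightarrow> g i x = 0"
    and dens_bnd: "\<And>i x. 0 \<le> g i x \<and> g i x \<le> C"
    and eta: "0 < \<eta>" and c: "0 < c" and h: "h \<in> {0, 1}" and n: "1 \<le> n"
  shows "measure M {\<omega> \<in> space M.
            \<exists>u\<in>Ugrid \<eta> n.
              sqrt (real n) * (Ftilde n Ind Q0 Y h u \<omega>
                 - prob_space.expectation M (Ftilde n Ind Q0 Y h u)) * wt u \<ge> c}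
         \<le> 6 * max C 1 / c * sqrt (real n) * e"
proof -
  interpret prob_space M by (rule P)
  define K where "K = max C 1"
  define X where "X = (\<lambda>j \<omega>. case j of CI i \<Rightarrow> (if Ind i \<omega> then 1 else 0) | CQ0 i \<Rightarrow> Q0 i \<omega> | CY i \<Rightarrow> (Y i \<omega>::real))"
  define J where "J = ({CI i | i. i < n} \<union> {CQ0 i | i. i < n} \<union> {CY i | i. i < n})"
  have ind: "indep_vars (\<lambda>_. borel) X J" using indep unfolding X_def J_def .
  define Z where "Z = (\<lambda>i \<omega>. if h = 0 then Q0 i \<omega> else Y i \<omega>)"
  define S where "S = (\<lambda>t \<omega>. \<Sum>i<n. if Ind i \<omega> \<and> Z i \<omega> \<le> t then 1 else (0::real))"
  define E where "E = (\<lambda>t i. {\<omega>\<in>space M. Ind i \<omega> \<and> Z i \<omega> \<le> t})"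
  have F_eq: "Ftilde n Ind Q0 Y h t \<omega> = S t \<omega> / real n" for t \<omega>
  proof -
    have eqs: "{i. i < n \<and> Ind i \<omega>} = {i\<in>{..<n}. Ind i \<omega>}" by auto
    have sg: "(\<Sum>i\<in>{i. i < n \<and> Ind i \<omega>}. G i) = (\<Sum>i<n. if Ind i \<omega> then G i else 0)" for G :: "nat \<Rightarrow> real"
      unfolding eqs by (rule sum.inter_filter) simp
    have "Ftilde n Ind Q0 Y h t \<omega> = (1 / real n) * (\<Sum>i<n. if Ind i \<omega> then
        (if (if h = 0 then Q0 i \<omega> else Q1 (Ind i) (Q0 i) (Y i) \<omega>) \<le> t then 1 else 0) else 0)"
      unfolding Ftilde_def sg ..
    also have "\<dots> = S t \<omega> / real n"
      unfolding S_def Z_def Q1_def by (auto intro!: sum.cong)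
    finally show ?thesis .
  qed
  have S_nonneg: "0 \<le> S t \<omega>" for t \<omega> unfolding S_def by (intro sum_nonneg) auto
  have S_mono: "S t \<omega> \<le> S t' \<omega>" if "t \<le> t'" for t t' \<omega>
    unfolding S_def using that by (intro sum_mono) auto
  have rvI: "{\<omega>\<in>space M. Ind i \<omega>} \<in> sets M" if "i < n" for i
  proof -
    have "random_variable borel (X (CI i))" using ind that unfolding indep_vars_def2 J_def by auto
    then have "X (CI i) -` {1} \<inter> space M \<in> sets M" by (rule measurable_sets) auto
    also have "X (CI i) -` {1} \<inter> space M = {\<omega>\<in>space M. Ind i \<omega>}" by (auto simp: X_def split: if_splits)
    finally show ?thesis .
  qed
  have K1: "1 \<le> K" "C \<le> K" unfolding K_def by auto
  have Zd: "distributed M lborel (Z i) (\<lambda>x. ennreal (if h = 0 then indicator {0<..<1} x else g i x))"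
    if "i < n" for i
    using unif[OF that] dens[OF that] unfolding Z_def by (cases "h = 0") auto
  have Zm: "Z i \<in> borel_measurable M" if "i < n" for i
    using distributed_measurable[OF Zd[OF that]] by simp
  have E_sets: "E t i \<in> sets M" if "i < n" for t i
  proof -
    have "E t i = {\<omega>\<in>space M. Ind i \<omega>} \<inter> {\<omega>\<in>space M. Z i \<omega> \<le> t}" by (auto simp: E_def)
    then show ?thesis using rvI[OF that] Zm[OF that] by auto
  qed
  have pE: "prob (E t i) \<le> e * (K * t)" if "i < n" "0 \<le> t" for t i
  proof -
    have "prob {\<omega>\<in>space M. Ind i \<omega> \<and> Z i \<omega> \<le> t} \<le> prob {\<omega>\<in>space M. Ind i \<omega>} * (K * t)"
    proof (rule pair_bound[OF P ind, where a="CI i" and b="if h = 0 then CQ0 i else CY i"])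
      show "CI i \<in> J" "(if h = 0 then CQ0 i else CY i) \<in> J" "CI i \<noteq> (if h = 0 then CQ0 i else CY i)"
        using that by (auto simp: J_def)
      show "X (CI i) \<omega> = (if Ind i \<omega> then 1 else 0)" for \<omega> by (simp add: X_def)
      show "X (if h = 0 then CQ0 i else CY i) \<omega> = Z i \<omega>" for \<omega> by (simp add: X_def Z_def)
      show "distributed M lborel (Z i) (\<lambda>x. ennreal (if h = 0 then indicator {0<..<1} x else g i x))"
        by (rule Zd[OF that(1)])
      show "0 \<le> (if h = 0 then indicator {0<..<1} x else g i x)" for x
        using dens_bnd[of i x] by auto
      show "(if h = 0 then indicator {0<..<1} x else g i x) \<le> K" for x
        using dens_bnd[of i x] K1 by (auto simp: indicator_def)
      show "(if h = 0 then indicator {0<..<1} x else g i x) = 0" if "x \<le> 0" for x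
        using dens_supp[of x i] that by auto
      show "0 \<le> t" by fact
    qed
    then show ?thesis using incl[OF that(1)] by (simp add: E_def)
  qed
  have markov: "prob {\<omega>\<in>space M. S t \<omega> \<ge> a} \<le> real n * e * K * t / a" if "0 < a" "0 \<le> t" for t a
  proof -
    define T where "T = (\<lambda>\<omega>. \<Sum>i<n. indicator (E t i) \<omega> :: real)"
    have ST: "S t \<omega> = T \<omega>" if "\<omega> \<in> space M" for \<omega>
      unfolding S_def T_def E_def using that by (intro sum.cong) (auto simp: indicator_def)
    have intT: "integrable M T" unfolding T_def
      by (rule Bochner_Integration.integrable_sum, rule integrable_real_indicator) (auto intro: E_sets simp: less_top[symmetric])
    have "prob {\<omega>\<in>space M. S t \<omega> \<ge> a} = prob {\<omega>\<in>space M. T \<omega> \<ge> a}"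
      by (rule arg_cong[where f=prob]) (auto simp: ST)
    also have "\<dots> \<le> (\<integral>\<omega>. T \<omega> \<partial>M) / a"
      by (rule integral_Markov_inequality_measure[OF intT _ _ that(1), where A="space M"])
        (auto simp: T_def intro!: sum_nonneg)
    also have "(\<integral>\<omega>. T \<omega> \<partial>M) = (\<Sum>i<n. \<integral>\<omega>. indicator (E t i) \<omega> \<partial>M)"
      unfolding T_def
      by (rule Bochner_Integration.integral_sum, rule integrable_real_indicator) (auto intro: E_sets simp: less_top[symmetric])
    also have "\<dots> = (\<Sum>i<n. prob (E t i))"
    proof (rule sum.cong)
      fix i assume "i \<in> {..<n}"
      have "E t i \<inter> space M = E t i" by (auto simp: E_def)
      then show "(\<integral>\<omega>. indicator (E t i) \<omega> \<partial>M) = prob (E t i)" by simp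
    qed simp
    also have "\<dots> \<le> (\<Sum>i<n. e * (K * t))"
      by (intro sum_mono pE that) auto
    also have "\<dots> = real n * e * K * t" by simp
    finally show ?thesis using that(1) by (simp add: divide_right_mono)
  qed
  have e0: "0 \<le> e" using incl[of 0] n by (metis measure_nonneg less_le_trans zero_less_one)
  have Sm: "S t \<in> borel_measurable M" for t
    unfolding S_def
  proof (rule borel_measurable_sum)
    fix i assume i: "i \<in> {..<n}"
    have "{\<omega>\<in>space M. Ind i \<omega> \<and> Z i \<omega> \<le> t} \<in> sets M" using E_sets[of i t] i by (simp add: E_def)
    then show "(\<lambda>\<omega>. if Ind i \<omega> \<and> Z i \<omega> \<le> t then 1 else (0::real)) \<in> borel_measurable M"
      by (intro measurable_If) auto
  qed
  define a where "a = (\<lambda>j::nat. c * sqrt (real n) * (1/2)^j / 3)"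
  define A where "A = (\<lambda>j::nat. {\<omega>\<in>space M. S ((1/4)^j) \<omega> \<ge> a j})"
  have A_sets: "A j \<in> sets M" for j unfolding A_def using Sm by measurable
  have a_pos: "0 < a j" for j unfolding a_def using c n by auto
  have sub: "{\<omega> \<in> space M. \<exists>u\<in>Ugrid \<eta> n.
              sqrt (real n) * (Ftilde n Ind Q0 Y h u \<omega>
                 - prob_space.expectation M (Ftilde n Ind Q0 Y h u)) * wt u \<ge> c}
           \<subseteq> (\<Union>j\<in>{..n}. A j)"
  proof
    fix \<omega> assume "\<omega> \<in> {\<omega> \<in> space M. \<exists>u\<in>Ugrid \<eta> n.
              sqrt (real n) * (Ftilde n Ind Q0 Y h u \<omega>
                 - prob_space.expectation M (Ftilde n Ind Q0 Y h u)) * wt u \<ge> c}"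
    then obtain u where \<omega>: "\<omega> \<in> space M" and uU: "u \<in> Ugrid \<eta> n"
      and ev: "c \<le> sqrt (real n) * (Ftilde n Ind Q0 Y h u \<omega>
                 - prob_space.expectation M (Ftilde n Ind Q0 Y h u)) * wt u" by auto
    have ul: "real n powr (-1 + \<eta>) < u" and uh: "u < 1/2" using uU by (auto simp: Ugrid_def)
    have u0: "0 < u" proof -
      have "0 \<le> real n powr (-1 + \<eta>)" by simp
      then show ?thesis using ul by linarith
    qed
    define EF where "EF = prob_space.expectation M (Ftilde n Ind Q0 Y h u)"
    have EF0: "0 \<le> EF" unfolding EF_def using S_nonneg by (intro Bochner_Integration.integral_nonneg) (simp add: F_eq)
    define r where "r = sqrt (u * (1 - u))"
    have r0: "0 < r" unfolding r_def using u0 uh by simp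
    have wtr: "wt u = 1 / r" unfolding wt_def r_def ..
    have sn: "0 < sqrt (real n)" using n by simp
    have "c \<le> sqrt (real n) * (S u \<omega> / real n - EF) / r"
      using ev unfolding EF_def[symmetric] F_eq wtr by simp
    also have "\<dots> \<le> sqrt (real n) * (S u \<omega> / real n) / r"
      using EF0 sn r0 by (intro divide_right_mono mult_left_mono) auto
    also have "\<dots> = S u \<omega> / (sqrt (real n) * r)"
    proof -
      have "real n = sqrt (real n) * sqrt (real n)" by simp
      then show ?thesis using sn r0 by (metis (no_types, opaque_lifting) divide_divide_eq_left
          nonzero_mult_div_cancel_left times_divide_eq_right order_less_irrefl)
    qed
    finally have Su: "c * sqrt (real n) * r \<le> S u \<omega>" using sn r0 by (simp add: field_simps)
    obtain j where j: "j \<le> n" "(1/4)^(j+1) < u" "u \<le> (1/4)^j"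
      using exists_j[of u n] small_pow[OF n eta] ul uh by auto
    have "((1/2::real)^j / 3)^2 \<le> u * (1 - u)"
    proof -
      have "((1/2::real)^j / 3)^2 = (1/4)^j / 9" by (simp add: power_divide power_mult_distrib[symmetric] power2_eq_square power_mult[symmetric])
      also have "\<dots> \<le> (1/4)^(j+1) / 2" by simp
      also have "\<dots> \<le> u / 2" using j by simp
      also have "\<dots> \<le> u * (1 - u)" using mult_left_mono[of "1/2" "1-u" u] u0 uh by simp
      finally show ?thesis .
    qed
    then have rj: "(1/2::real)^j / 3 \<le> r" unfolding r_def by (rule real_le_rsqrt)
    have "a j \<le> c * sqrt (real n) * r" unfolding a_def using rj c sn
      by (simp add: mult_left_mono)
    also have "\<dots> \<le> S u \<omega>" by (rule Su)
    also have "\<dots> \<le> S ((1/4)^j) \<omega>" by (rule S_mono) (use j in simp)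
    finally show "\<omega> \<in> (\<Union>j\<in>{..n}. A j)" using j \<omega> unfolding A_def by auto
  qed
  have bound_j: "prob (A j) \<le> 3 * K / c * sqrt (real n) * e * (1/2)^j" for j
  proof -
    have "prob (A j) \<le> real n * e * K * (1/4)^j / a j"
      unfolding A_def by (rule markov[OF a_pos]) simp
    also have "\<dots> = 3 * K / c * sqrt (real n) * e * (1/2)^j"
    proof -
      have "real n = sqrt (real n) * sqrt (real n)" by simp
      moreover have "(1/4::real)^j = (1/2)^j * (1/2)^j" by (simp add: power_mult_distrib[symmetric])
      moreover have "sqrt (real n) > 0" using n by simp
      ultimately show ?thesis unfolding a_def using c by (simp add: field_simps)
    qed
    finally show ?thesis .
  qed
  have gsum: "(\<Sum>j\<le>m. (1/2::real)^j) \<le> 2" for m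
  proof -
    have "(\<Sum>j\<le>m. (1/2::real)^j) = 2 - (1/2)^m" by (induction m) auto
    then show ?thesis by simp
  qed
  have "prob {\<omega> \<in> space M. \<exists>u\<in>Ugrid \<eta> n.
              sqrt (real n) * (Ftilde n Ind Q0 Y h u \<omega>
                 - prob_space.expectation M (Ftilde n Ind Q0 Y h u)) * wt u \<ge> c}
        \<le> prob (\<Union>j\<in>{..n}. A j)"
    using sub A_sets by (cases "{\<omega> \<in> space M. \<exists>u\<in>Ugrid \<eta> n.
              sqrt (real n) * (Ftilde n Ind Q0 Y h u \<omega>
                 - prob_space.expectation M (Ftilde n Ind Q0 Y h u)) * wt u \<ge> c} \<in> sets M")
      (auto intro!: finite_measure_mono simp: measure_notin_sets)
  also have "\<dots> \<le> (\<Sum>j\<le>n. prob (A j))" by (rule measure_UNION_le) (auto intro: A_sets)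
  also have "\<dots> \<le> (\<Sum>j\<le>n. 3 * K / c * sqrt (real n) * e * (1/2)^j)" by (intro sum_mono bound_j)
  also have "\<dots> = 3 * K / c * sqrt (real n) * e * (\<Sum>j\<le>n. (1/2)^j)" by (simp add: sum_distrib_left)
  also have "\<dots> \<le> 3 * K / c * sqrt (real n) * e * 2"
    using K1 c e0 by (intro mult_left_mono gsum) auto
  finally show ?thesis unfolding K_def by simp
qed

theorem lemma14:
  fixes M :: "nat \<Rightarrow> 'a measure"
    and Ind :: "nat \<Rightarrow> nat \<Rightarrow> 'a \<Rightarrow> bool"
    and Q0 Y :: "nat \<Rightarrow> nat \<Rightarrow> 'a \<Rightarrow> real"
    and g :: "nat \<Rightarrow> nat \<Rightarrow> real \<Rightarrow> real"
    and \<beta> C \<eta> c :: real and h :: nat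
  assumes beta: "1/2 < \<beta>" "\<beta> < 1"
    and prob: "\<And>n. prob_space (M n)"
    and indep: "\<And>n. prob_space.indep_vars (M n) (\<lambda>_. borel)
        (\<lambda>j \<omega>. case j of CI i \<Rightarrow> (if Ind n i \<omega> then 1 else 0) | CQ0 i \<Rightarrow> Q0 n i \<omega> | CY i \<Rightarrow> Y n i \<omega>)
        ({CI i | i. i < n} \<union> {CQ0 i | i. i < n} \<union> {CY i | i. i < n})"
    and incl: "\<And>n i. i < n \<Longrightarrow>
        measure (M n) {\<omega> \<in> space (M n). Ind n i \<omega>} = eps_n \<beta> n"
    and unif: "\<And>n i. i < n \<Longrightarrow>
        distributed (M n) lborel (Q0 n i) (\<lambda>x. ennreal (indicator {0<..<1} x))"
    and dens: "\<And>n i. i < n \<Longrightarrow>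
        distributed (M n) lborel (Y n i) (\<lambda>x. ennreal (g n i x))"
    and dens_supp: "\<And>n i x. x \<notin> {0<..<1} \<Longrightarrow> g n i x = 0"
    and dens_cont: "\<And>n i. continuous_on {0<..<1} (g n i)"
    and dens_bnd: "\<And>n i x. 0 \<le> g n i x \<and> g n i x \<le> C"
    and eta: "0 < \<eta>" "\<eta> < 1/2"
    and c: "0 < c"
    and h: "h \<in> {0, 1}"
  shows "(\<lambda>n. measure (M n) {\<omega> \<in> space (M n).
            \<exists>u\<in>Ugrid \<eta> n.
              sqrt (real n) * (Ftilde n (Ind n) (Q0 n) (Y n) h u \<omega>
                 - prob_space.expectation (M n) (Ftilde n (Ind n) (Q0 n) (Y n) h u)) * wt u \<ge> c})
         \<longlonglongrightarrow> 0"
proof -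
  define B where "B = (\<lambda>n::nat. 6 * max C 1 / c * (real n powr (1/2 - \<beta>)))"
  have lim: "B \<longlonglongrightarrow> 0"
  proof -
    have "(\<lambda>n. real n powr (1/2 - \<beta>)) \<longlonglongrightarrow> 0"
      by (rule tendsto_neg_powr[OF _ filterlim_real_sequentially]) (use beta in simp)
    then show ?thesis unfolding B_def by (rule tendsto_mult_right_zero)
  qed
  show ?thesis
  proof (rule tendsto_sandwich[OF _ _ tendsto_const lim])
    show "\<forall>\<^sub>F n in sequentially. 0 \<le> measure (M n) {\<omega> \<in> space (M n).
            \<exists>u\<in>Ugrid \<eta> n.
              sqrt (real n) * (Ftilde n (Ind n) (Q0 n) (Y n) h u \<omega>
                 - prob_space.expectation (M n) (Ftilde n (Ind n) (Q0 n) (Y n) h u)) * wt u \<ge> c}"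
      by (simp add: measure_nonneg)
    show "\<forall>\<^sub>F n in sequentially. measure (M n) {\<omega> \<in> space (M n).
            \<exists>u\<in>Ugrid \<eta> n.
              sqrt (real n) * (Ftilde n (Ind n) (Q0 n) (Y n) h u \<omega>
                 - prob_space.expectation (M n) (Ftilde n (Ind n) (Q0 n) (Y n) h u)) * wt u \<ge> c} \<le> B n"
    proof (rule eventually_sequentiallyI[of 1])
      fix n :: nat assume n: "1 \<le> n"
      have "measure (M n) {\<omega> \<in> space (M n).
            \<exists>u\<in>Ugrid \<eta> n.
              sqrt (real n) * (Ftilde n (Ind n) (Q0 n) (Y n) h u \<omega>
                 - prob_space.expectation (M n) (Ftilde n (Ind n) (Q0 n) (Y n) h u)) * wt u \<ge> c}
          \<le> 6 * max C 1 / c * sqrt (real n) * eps_n \<beta> n"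
        by (rule per_n[OF prob indep incl unif dens dens_supp dens_bnd eta(1) c h n])
      also have "6 * max C 1 / c * sqrt (real n) * eps_n \<beta> n = B n"
      proof -
        have "sqrt (real n) * eps_n \<beta> n = real n powr (1/2 - \<beta>)"
          using n by (simp add: eps_n_def powr_half_sqrt[symmetric] powr_add[symmetric])
        then show ?thesis unfolding B_def by (metis mult.assoc)
      qed
      finally show "measure (M n) {\<omega> \<in> space (M n).
            \<exists>u\<in>Ugrid \<eta> n.
              sqrt (real n) * (Ftilde n (Ind n) (Q0 n) (Y n) h u \<omega>
                 - prob_space.expectation (M n) (Ftilde n (Ind n) (Q0 n) (Y n) h u)) * wt u \<ge> c} \<le> B n"
        .
    qed
  qed
qed

end
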